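(* Let ${\cal M}$ be a multiset of strings over $\Sigma$, let $L=\mathrm{colexBWT}({\cal M})$, and let $r_{OPT}$ be the minimum of $\mathrm{runs}(L')$ over all separator-based BWTs $L'$ of ${\cal M}$. Then $\mathrm{runs}(L)\le r_{OPT}+2c_{\cal M}$, where $c_{\cal M}$ is the number of interesting intervals of ${\cal M}$.
   Context: A run is a maximal substring consisting of one repeated character; $\mathrm{runs}(T)$ is the number of runs of $T$. $\Sigma$ is a finite ordered alphabet; $\#<\$<$ every character of $\Sigma$ and $\$_1<\cdots<\$_k<$ every character of $\Sigma$. $\mathrm{BWT}(T)$ is the concatenation of the last characters of the lexicographically sorted rotations of $T$. Omega-order: writing $S=\mathrm{root}(S)^{\exp(S)}$ with $\mathrm{root}(S)$ primitive, $S\prec_\omega T$ iff either $\mathrm{root}(S)=\mathrm{root}(T)$ and $\exp(S)<\exp(T)$, or $S^\omega<_{\mathrm{lex}}T^\omega$; $\mathrm{eBWT}$ of a multiset is the concatenation of last characters of all rotations of all its strings sorted in omega-order. For ${\cal M}=\{T_1,\ldots,T_k\}$ and a listing $(T_{\pi(1)},\ldots,T_{\pi(k)})$, the separator-based BWTs are: $\mathrm{dolEBWT}({\cal M})=\mathrm{eBWT}(\{T_i\$\})$; the mdolBWT of the listing, $\mathrm{BWT}(T_{\pi(1)}\$_1\cdots T_{\pi(k)}\$_k)$ with each $\$_j$ renamed $\$$; the concBWT of the listing, $\mathrm{BWT}(T_{\pi(1)}\$\cdots T_{\pi(k)}\$\#)$ with first character removed and $\#$ renamed $\$$; and $\mathrm{colexBWT}({\cal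 M})$, the mdolBWT of the listing of ${\cal M}$ in colexicographic order ($S<_{\mathrm{colex}}T$ iff reverse of $S$ $<_{\mathrm{lex}}$ reverse of $T$). Interesting intervals: with ${\cal R}$ the multiset of all rotations of the $T_i\$$ in lexicographic order, for $U\in\Sigma^*$ a suffix of at least two $T_i$ let $b=1+|\{R\in{\cal R}:R<_{\mathrm{lex}}U\$,\ U\$\text{ not a prefix of }R\}|$ and $e=b-1+|\{i:U\text{ suffix of }T_i\}|$; the character preceding the suffix occurrence of $U$ in $T_i$ is the one cyclically before it in $T_i\$$ ($\$$ if $U=T_i$); $[b,e]$ is interesting if some $i\neq j$ have $U$ as a suffix with different preceding characters. *)

theory Defs
  imports Main "HOL-Library.Multiset" "HOL-Library.List_Lexorder" "HOL-Library.Sublist"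
begin

text \<open>Hash is the end marker #, Dol 0 is the plain separator $, Dol j (j >= 1) is $_j,
  and Ch a is a character a of Sigma.\<close>

datatype 'a xchar = Hash | Dol nat | Ch 'a

fun le_xchar :: "'a::linorder xchar \<Rightarrow> 'a xchar \<Rightarrow> bool" where
  "le_xchar Hash _ = True"
| "le_xchar (Dol i) Hash = False"
| "le_xchar (Dol i) (Dol j) = (i \<le> j)"
| "le_xchar (Dol i) (Ch b) = True"
| "le_xchar (Ch a) Hash = False"
| "le_xchar (Ch a) (Dol j) = False"
| "le_xchar (Ch a) (Ch b) = (a \<le> b)"

instantiation xchar :: (linorder) linorder
begin
definition less_eq_xchar :: "'a xchar \<Rightarrow> 'a xchar \<Rightarrow> bool" where
  "less_eq_xchar x y = le_xchar x y"
definition less_xchar :: "'a xchar \<Rightarrow> 'a xchar \<Rightarrow> bool" where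
  "less_xchar x y = (le_xchar x y \<and> \<not> le_xchar y x)"
instance
proof
  fix x y z :: "'a xchar"
  show "(x < y) = (x \<le> y \<and> \<not> y \<le> x)" by (simp add: less_eq_xchar_def less_xchar_def)
  show "x \<le> x" by (cases x) (auto simp: less_eq_xchar_def)
  show "x \<le> y \<Longrightarrow> y \<le> z \<Longrightarrow> x \<le> z"
    by (cases x; cases y; cases z) (auto simp: less_eq_xchar_def)
  show "x \<le> y \<Longrightarrow> y \<le> x \<Longrightarrow> x = y"
    by (cases x; cases y) (auto simp: less_eq_xchar_def)
  show "x \<le> y \<or> y \<le> x"
    by (cases x; cases y) (auto simp: less_eq_xchar_def)
qed
end

definition runs :: "'b list \<Rightarrow> nat" where
  "runs T = length (remdups_adj T)"

definition rotations :: "'b list \<Rightarrow> 'b list list" where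
  "rotations T = map (\<lambda>i. rotate i T) [0..<length T]"

definition bwt :: "'b::linorder list \<Rightarrow> 'b list" where
  "bwt T = map last (sort (rotations T))"

definition primitive :: "'b list \<Rightarrow> bool" where
  "primitive S \<longleftrightarrow> S \<noteq> [] \<and> \<not> (\<exists>u k. k \<ge> 2 \<and> S = concat (replicate k u))"

definition root :: "'b list \<Rightarrow> 'b list" where
  "root S = (THE u. primitive u \<and> (\<exists>k. S = concat (replicate k u)))"

definition expo :: "'b list \<Rightarrow> nat" where
  "expo S = length S div length (root S)"

definition omega :: "'b list \<Rightarrow> nat \<Rightarrow> 'b" where
  "omega S i = S ! (i mod length S)"

definition lex_less_inf :: "(nat \<Rightarrow> 'b::linorder) \<Rightarrow> (nat \<Rightarrow> 'b) \<Rightarrow> bool" where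
  "lex_less_inf f g \<longleftrightarrow> (\<exists>n. (\<forall>i<n. f i = g i) \<and> f n < g n)"

definition omega_less :: "'b::linorder list \<Rightarrow> 'b list \<Rightarrow> bool" where
  "omega_less S T \<longleftrightarrow> (root S = root T \<and> expo S < expo T) \<or> lex_less_inf (omega S) (omega T)"

definition is_ebwt :: "'b::linorder list multiset \<Rightarrow> 'b list \<Rightarrow> bool" where
  "is_ebwt Ss L \<longleftrightarrow> (\<exists>xs. mset xs = (\<Sum>S\<in>#Ss. mset (rotations S))
      \<and> sorted_wrt (\<lambda>a b. \<not> omega_less b a) xs \<and> L = map last xs)"

definition dol_str :: "'a list \<Rightarrow> 'a xchar list" where
  "dol_str T = map Ch T @ [Dol 0]"

definition ren_dol :: "'a xchar \<Rightarrow> 'a xchar" where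
  "ren_dol c = (case c of Dol _ \<Rightarrow> Dol 0 | _ \<Rightarrow> c)"

definition ren_hash :: "'a xchar \<Rightarrow> 'a xchar" where
  "ren_hash c = (case c of Hash \<Rightarrow> Dol 0 | _ \<Rightarrow> c)"

definition is_dolEBWT :: "'a::linorder list multiset \<Rightarrow> 'a xchar list \<Rightarrow> bool" where
  "is_dolEBWT M L \<longleftrightarrow> is_ebwt (image_mset dol_str M) L"

definition mdolBWT :: "'a::linorder list list \<Rightarrow> 'a xchar list" where
  "mdolBWT xs = map ren_dol
     (bwt (concat (map (\<lambda>(j, T). map Ch T @ [Dol (Suc j)]) (enumerate 0 xs))))"

definition concBWT :: "'a::linorder list list \<Rightarrow> 'a xchar list" where
  "concBWT xs = map ren_hash (tl (bwt (concat (map dol_str xs) @ [Hash])))"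

definition colex_listing :: "'a::linorder list multiset \<Rightarrow> 'a list list" where
  "colex_listing M = sort_key rev (sorted_list_of_multiset M)"

definition colexBWT :: "'a::linorder list multiset \<Rightarrow> 'a xchar list" where
  "colexBWT M = mdolBWT (colex_listing M)"

definition sep_bwts :: "'a::linorder list multiset \<Rightarrow> 'a xchar list set" where
  "sep_bwts M = {L. is_dolEBWT M L}
     \<union> {mdolBWT xs | xs. mset xs = M} \<union> {concBWT xs | xs. mset xs = M}"

definition r_opt :: "'a::linorder list multiset \<Rightarrow> nat" where
  "r_opt M = Min (runs ` sep_bwts M)"

definition all_rots :: "'a list multiset \<Rightarrow> 'a xchar list multiset" where
  "all_rots M = (\<Sum>T\<in>#M. mset (rotations (dol_str T)))"

text \<open>Character cyclically preceding the suffix occurrence of U in T $.\<close>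
definition prec_char :: "'a list \<Rightarrow> 'a list \<Rightarrow> 'a xchar" where
  "prec_char T U = (if U = T then Dol 0 else Ch (T ! (length T - length U - 1)))"

definition n_suff :: "'a list multiset \<Rightarrow> 'a list \<Rightarrow> nat" where
  "n_suff M U = size (filter_mset (\<lambda>T. suffix U T) M)"

definition int_b :: "'a::linorder list multiset \<Rightarrow> 'a list \<Rightarrow> nat" where
  "int_b M U = 1 + size (filter_mset (\<lambda>R. R < dol_str U \<and> \<not> prefix (dol_str U) R) (all_rots M))"

definition int_e :: "'a::linorder list multiset \<Rightarrow> 'a list \<Rightarrow> nat" where
  "int_e M U = int_b M U - 1 + n_suff M U"

definition interesting_intervals :: "'a::linorder list multiset \<Rightarrow> (nat \<times> nat) set" where
  "interesting_intervals M = {(int_b M U, int_e M U) | U.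
      n_suff M U \<ge> 2 \<and>
      (\<exists>T\<in>#M. \<exists>T'\<in>#M. suffix U T \<and> suffix U T' \<and> prec_char T U \<noteq> prec_char T' U)}"

definition c_M :: "'a::linorder list multiset \<Rightarrow> nat" where
  "c_M M = card (interesting_intervals M)"

end

theory Submission
  imports Defs
begin


lemma xchar_less_simps[simp]:
  "(Ch a < Ch b) = (a < b)" "(Ch a \<le> Ch b) = (a \<le> b)"
  "Dol i < Ch b" "Dol i \<le> Ch b" "\<not> Ch a < Dol i" "\<not> Ch a \<le> Dol i"
  "(Dol i < Dol j) = (i < j)" "(Dol i \<le> Dol j) = (i \<le> j)"
  "Hash \<le> x" "(x \<le> Hash) = (x = Hash)" "(Hash < x) = (x \<noteq> Hash)"
  for a b :: "'a::linorder"
  by (cases x; auto simp: less_eq_xchar_def less_xchar_def)+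

lemma lex_idx:
  fixes A B :: "'b::linorder list"
  shows "p < length A \<Longrightarrow> p < length B \<Longrightarrow> (\<forall>i<p. A!i = B!i) \<Longrightarrow> A!p < B!p \<Longrightarrow> A < B"
proof (induction p arbitrary: A B)
  case 0 then show ?case by (cases A; cases B) auto
next
  case (Suc p)
  then show ?case
    by (cases A; cases B) (auto, metis Suc_less_eq nth_Cons_Suc)
qed

lemma append_le_append_iff: "((u::'b::linorder list) @ a \<le> u @ b) = (a \<le> b)"
  by (induction u) auto

lemma dol_str_less:
  fixes V2 V1 :: "'a::linorder list"
  assumes "dol_str V2 < dol_str V1"
  shows "\<exists>p\<le>length V2. p < length V1 \<and> take p V2 = take p V1 \<and> (p = length V2 \<or> V2!p < V1!p)"
  using assms
proof (induction V2 arbitrary: V1)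
  case Nil
  then show ?case by (cases V1) (auto simp: dol_str_def)
next
  case (Cons a V2)
  then show ?case
  proof (cases V1)
    case Nil
    with Cons show ?thesis by (auto simp: dol_str_def)
  next
    case (Cons b V1')
    show ?thesis
    proof (cases "a < b")
      case True
      then show ?thesis using Cons by (intro exI[of _ 0]) auto
    next
      case False
      with Cons.prems Cons have "a = b" "dol_str V2 < dol_str V1'" by (auto simp: dol_str_def)
      from Cons.IH[OF this(2)] obtain p where "p\<le>length V2" "p < length V1'" "take p V2 = take p V1'"
        "(p = length V2 \<or> V2!p < V1'!p)" by blast
      then show ?thesis using \<open>a = b\<close> Cons by (intro exI[of _ "Suc p"]) auto
    qed
  qed
qed

lemma inj_Ch: "inj Ch" by (auto simp: inj_def)

lemma dol_str_inj: "dol_str U = dol_str V \<longleftrightarrow> U = V"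
  by (auto simp: dol_str_def inj_map_eq_map[OF inj_Ch])



lemma runs_Nil[simp]: "runs [] = 0" by (simp add: runs_def)

lemma runs_Cons: "runs (x # Y) = (if Y \<noteq> [] \<and> x = hd Y then runs Y else Suc (runs Y))"
  by (cases Y) (auto simp: runs_def)

lemma runs_append:
  "runs (X @ Y) + (if X \<noteq> [] \<and> Y \<noteq> [] \<and> last X = hd Y then 1 else 0) = runs X + runs Y"
proof (induction X)
  case Nil then show ?case by simp
next
  case (Cons x X)
  show ?case
  proof (cases X)
    case Nil then show ?thesis by (simp add: runs_Cons)
  next
    case (Cons x' X')
    then show ?thesis using Cons.IH by (simp add: runs_Cons)
  qed
qed

lemma runs_pos: "X \<noteq> [] \<Longrightarrow> runs X \<ge> 1"
  by (simp add: runs_def)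

lemma sorted_remdups_adj_distinct: "sorted (H::'b::linorder list) \<Longrightarrow> distinct (remdups_adj H)"
proof (induction H rule: remdups_adj.induct)
  case 1 then show ?case by simp
next
  case (2 x) then show ?case by simp
next
  case (3 x y xs)
  then show ?case by (auto simp: order.strict_iff_order)
qed

lemma runs_sorted: "sorted (H::'b::linorder list) \<Longrightarrow> runs H = card (set H)"
  using sorted_remdups_adj_distinct[of H] distinct_card[of "remdups_adj H"]
  by (simp add: runs_def)

lemma runs_ge_card: "card (set H) \<le> runs H"
  using card_length[of "remdups_adj H"] by (simp add: runs_def)

definition nonconst :: "'b list \<Rightarrow> bool" where
  "nonconst G \<longleftrightarrow> (\<exists>a\<in>set G. \<exists>b\<in>set G. a \<noteq> b)"

definition dflag :: "'b list \<Rightarrow> 'b list \<Rightarrow> nat" where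
  "dflag A B = (if A \<noteq> [] \<and> B \<noteq> [] \<and> hd A \<noteq> hd B then 1 else 0)"

lemma runs_groups:
  fixes Gs Hs :: "'b::linorder list list"
  assumes "list_all2 (\<lambda>G H. mset G = mset H \<and> sorted H) Gs Hs"
  shows "runs (concat Hs) + dflag (concat Gs) (concat Hs)
     \<le> runs (concat Gs) + 2 * length (filter nonconst Gs)"
  using assms
proof (induction rule: list_all2_induct)
  case Nil then show ?case by (simp add: dflag_def)
next
  case (Cons G Gs H Hs)
  define A where "A = concat Gs"
  define B where "B = concat Hs"
  define c where "c = length (filter nonconst Gs)"
  have IH: "runs B + dflag A B \<le> runs A + 2 * c" using Cons.IH by (simp add: A_def B_def c_def)
  have lenAB: "length A = length B"
    using Cons.hyps(2) unfolding A_def B_def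
    by (induction rule: list_all2_induct) (auto dest: mset_eq_length)
  have GH: "mset G = mset H" "sorted H" using Cons.hyps(1) by auto
  have setGH: "set G = set H" using GH(1) by (metis set_mset_mset)
  have lenGH: "length G = length H" using GH(1) mset_eq_length by blast
  have rGA: "runs (G @ A) + (if G \<noteq> [] \<and> A \<noteq> [] \<and> last G = hd A then 1 else 0) = runs G + runs A"
    by (rule runs_append)
  have rHB: "runs (H @ B) + (if H \<noteq> [] \<and> B \<noteq> [] \<and> last H = hd B then 1 else 0) = runs H + runs B"
    by (rule runs_append)
  have rH: "runs H \<le> runs G"
    using runs_sorted[OF GH(2)] runs_ge_card[of G] setGH by simp
  have e1: "runs G + runs A \<le> runs (G @ A) + 1" using rGA by (simp split: if_splits)
  have e2: "runs (H @ B) \<le> runs H + runs B" using rHB by (simp split: if_splits)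
  have main: "runs (H @ B) + dflag (G @ A) (H @ B) \<le> runs (G @ A) + 2 * (if nonconst G then Suc c else c)"
  proof (cases "G = []")
    case True
    then have "H = []" using lenGH by simp
    then show ?thesis using True IH by simp
  next
    case Gne: False
    show ?thesis
    proof (cases "nonconst G")
      case True
      have "dflag (G @ A) (H @ B) \<le> 1" by (simp add: dflag_def)
      then show ?thesis using True IH e1 e2 rH by simp
    next
      case False
      then obtain g where g: "\<forall>x\<in>set G. x = g"
        using Gne unfolding nonconst_def by (metis list.set_sel(1))
      then have Grep: "G = replicate (length G) g" by (metis replicate_length_same)
      have "\<forall>x\<in>set H. x = g" using g setGH by simp
      then have "H = replicate (length H) g" by (metis replicate_length_same)
      then have HG: "H = G" using Grep lenGH by simp
      have lastG: "last G = g" "hd G = g" using Gne g by auto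
      have d0: "dflag (G @ A) (H @ B) = 0" using HG Gne by (simp add: dflag_def)
      show ?thesis
      proof (cases "A = []")
        case True
        then have "B = []" using lenAB by simp
        then show ?thesis using True HG d0 False by simp
      next
        case Ane: False
        then have Bne: "B \<noteq> []" using lenAB by auto
        show ?thesis
        proof (cases "hd A = hd B")
          case True
          then have "runs B \<le> runs A + 2 * c" using IH by simp
          then show ?thesis using rGA rHB HG d0 False Ane Bne lastG True by simp
        next
          case ne: False
          then have "runs B + 1 \<le> runs A + 2 * c" using IH Ane Bne by (simp add: dflag_def)
          then show ?thesis using e1 e2 HG d0 False by simp
        qed
      qed
    qed
  qed
  then show ?case unfolding A_def B_def c_def by (simp split: if_splits)
qed



lemma group_concat:
  fixes xs :: "('k::linorder \<times> 'c) list"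
  assumes "sorted_wrt (\<lambda>x y. fst x \<le> fst y) xs" "sorted K" "distinct K" "fst ` set xs \<subseteq> set K"
  shows "concat (map (\<lambda>k. filter (\<lambda>x. fst x = k) xs) K) = xs"
  using assms
proof (induction xs)
  case Nil then show ?case by (induction K) auto
next
  case (Cons x xs)
  have IH: "concat (map (\<lambda>k. filter (\<lambda>x. fst x = k) xs) K) = xs" using Cons by auto
  have "fst x \<in> set K" using Cons.prems by auto
  then obtain K1 K2 where K: "K = K1 @ fst x # K2" by (metis split_list)
  have lt: "\<forall>k\<in>set K1. k < fst x" using Cons.prems(2,3) K
    by (auto simp: sorted_append order.strict_iff_order)
  have ge: "\<forall>y\<in>set xs. fst x \<le> fst y" using Cons.prems(1) by simp
  have n2: "fst x \<notin> set K2" using Cons.prems(3) K by simp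
  define F where "F = (\<lambda>k. filter (\<lambda>y. fst y = k) (x # xs))"
  define F' where "F' = (\<lambda>k. filter (\<lambda>y. fst y = k) xs)"
  have m1: "map F K1 = map (\<lambda>_. []) K1"
  proof (rule map_cong[OF refl])
    fix k assume "k \<in> set K1"
    then have "k < fst x" using lt by blast
    then show "F k = []" using ge unfolding F_def by (auto simp: filter_empty_conv)
  qed
  have m1': "map F' K1 = map (\<lambda>_. []) K1"
  proof (rule map_cong[OF refl])
    fix k assume "k \<in> set K1"
    then have "k < fst x" using lt by blast
    then show "F' k = []" using ge unfolding F'_def by (auto simp: filter_empty_conv)
  qed
  have m2: "map F K2 = map F' K2"
    by (rule map_cong[OF refl]) (use n2 in \<open>auto simp: F_def F'_def\<close>)
  have e0: "concat (map (\<lambda>_. []) K1) = []" by (induction K1) auto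
  have fx: "F (fst x) = x # F' (fst x)" by (simp add: F_def F'_def)
  have "concat (map F K) = x # concat (map F' K)"
    unfolding K by (simp only: map_append list.map concat_append concat.simps m1 m1' m2 fx e0) simp
  then have "concat (map (\<lambda>k. filter (\<lambda>y. fst y = k) (x # xs)) K)
      = x # concat (map (\<lambda>k. filter (\<lambda>x. fst x = k) xs) K)" by (simp add: F_def F'_def)
  then show ?case using IH by simp
qed

theorem runs_compare:
  fixes xs ys :: "('k::linorder \<times> 'c::linorder) list"
  assumes ms: "mset xs = mset ys"
    and sx: "sorted_wrt (\<lambda>x y. fst x \<le> fst y) xs"
    and sy: "sorted_wrt (\<lambda>x y. fst x < fst y \<or> (fst x = fst y \<and> snd x \<le> snd y)) ys"
  shows "runs (map snd ys) \<le> runs (map snd xs)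
     + 2 * card {k. \<exists>a b. (k, a) \<in> set xs \<and> (k, b) \<in> set xs \<and> a \<noteq> b}"
proof -
  define K where "K = sorted_list_of_set (fst ` set xs)"
  have setxy: "set xs = set ys" using ms by (metis set_mset_mset)
  have K: "sorted K" "distinct K" "set K = fst ` set xs" by (auto simp: K_def)
  have sy': "sorted_wrt (\<lambda>x y. fst x \<le> fst y) ys"
    by (rule sorted_wrt_mono_rel[OF _ sy]) auto
  define Gs where "Gs = map (\<lambda>k. map snd (filter (\<lambda>x. fst x = k) xs)) K"
  define Hs where "Hs = map (\<lambda>k. map snd (filter (\<lambda>x. fst x = k) ys)) K"
  have "concat Gs = map snd (concat (map (\<lambda>k. filter (\<lambda>x. fst x = k) xs) K))"
    unfolding Gs_def by (simp add: map_concat o_def)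
  then have cx: "concat Gs = map snd xs"
    using group_concat[OF sx K(1,2)] K(3) by simp
  have "concat Hs = map snd (concat (map (\<lambda>k. filter (\<lambda>x. fst x = k) ys) K))"
    unfolding Hs_def by (simp add: map_concat o_def)
  then have cy: "concat Hs = map snd ys"
    using group_concat[OF sy' K(1,2)] K(3) setxy by simp
  have la: "list_all2 (\<lambda>G H. mset G = mset H \<and> sorted H) Gs Hs"
    unfolding Gs_def Hs_def list_all2_map1 list_all2_map2
  proof (rule list_all2_refl)
    fix k
    have "mset (map snd (filter (\<lambda>x. fst x = k) xs)) = mset (map snd (filter (\<lambda>x. fst x = k) ys))"
      using ms by (simp add: mset_filter)
    moreover have "sorted (map snd (filter (\<lambda>x. fst x = k) ys))"
    proof -
      have "sorted_wrt (\<lambda>x y. fst x < fst y \<or> (fst x = fst y \<and> snd x \<le> snd y)) (filter (\<lambda>x. fst x = k) ys)"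
        using sy by (rule sorted_wrt_filter)
      then have "sorted_wrt (\<lambda>x y. snd x \<le> snd y) (filter (\<lambda>x. fst x = k) ys)"
        by (rule sorted_wrt_mono_rel[rotated]) auto
      then show ?thesis by (simp add: sorted_wrt_map)
    qed
    ultimately show "mset (map snd (filter (\<lambda>x. fst x = k) xs)) = mset (map snd (filter (\<lambda>x. fst x = k) ys)) \<and>
         sorted (map snd (filter (\<lambda>x. fst x = k) ys))" by simp
  qed
  have cnt: "length (filter nonconst Gs) = card {k. \<exists>a b. (k, a) \<in> set xs \<and> (k, b) \<in> set xs \<and> a \<noteq> b}"
  proof -
    have "length (filter nonconst Gs) = length (filter (\<lambda>k. nonconst (map snd (filter (\<lambda>x. fst x = k) xs))) K)"
      unfolding Gs_def by (simp add: filter_map o_def)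
    also have "\<dots> = card (set (filter (\<lambda>k. nonconst (map snd (filter (\<lambda>x. fst x = k) xs))) K))"
      by (rule distinct_card[symmetric], rule distinct_filter, rule K(2))
    also have "set (filter (\<lambda>k. nonconst (map snd (filter (\<lambda>x. fst x = k) xs))) K)
        = {k. \<exists>a b. (k, a) \<in> set xs \<and> (k, b) \<in> set xs \<and> a \<noteq> b}"
      using K(3) by (auto simp: nonconst_def image_iff) (metis fst_conv)+
    finally show ?thesis .
  qed
  show ?thesis using runs_groups[OF la] cx cy cnt by simp
qed



lemma in_sum_mset_iff: "x \<in># (\<Sum>T\<in>#M. f T) \<longleftrightarrow> (\<exists>T\<in>#M. x \<in># f T)"
  by (induction M) auto

definition itemsT :: "'a list \<Rightarrow> ('a xchar list \<times> 'a xchar) list" where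
  "itemsT T = map (\<lambda>q. (dol_str (drop q T), prec_char T (drop q T))) [0..<Suc (length T)]"

definition items :: "'a list multiset \<Rightarrow> ('a xchar list \<times> 'a xchar) multiset" where
  "items M = (\<Sum>T\<in>#M. mset (itemsT T))"

lemma in_items: "(k, a) \<in># items M \<longleftrightarrow> (\<exists>T\<in>#M. \<exists>U. suffix U T \<and> k = dol_str U \<and> a = prec_char T U)"
proof -
  have "(k, a) \<in> set (itemsT T) \<longleftrightarrow> (\<exists>U. suffix U T \<and> k = dol_str U \<and> a = prec_char T U)" for T :: "'a list"
  proof
    assume "(k, a) \<in> set (itemsT T)"
    then obtain q where "k = dol_str (drop q T)" "a = prec_char T (drop q T)"
      unfolding itemsT_def by (auto simp del: upt_Suc)
    then show "\<exists>U. suffix U T \<and> k = dol_str U \<and> a = prec_char T U"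
      using suffix_drop by blast
  next
    assume "\<exists>U. suffix U T \<and> k = dol_str U \<and> a = prec_char T U"
    then obtain U W where "T = W @ U" "k = dol_str U" "a = prec_char T U" by (auto simp: suffix_def)
    then show "(k, a) \<in> set (itemsT T)" unfolding itemsT_def
      by (auto intro!: image_eqI[of _ _ "length W"])
  qed
  then show ?thesis by (simp add: items_def in_sum_mset_iff)
qed

lemma prefix_le: "prefix (d::'b::linorder list) R \<Longrightarrow> d \<le> R"
proof -
  assume "prefix d R"
  then obtain z where "R = d @ z" by (auto simp: prefix_def)
  then show ?thesis by (induction d arbitrary: R) auto
qed

lemma nth_dol_str: "p \<le> length U \<Longrightarrow> dol_str U ! p = (if p < length U then Ch (U!p) else Dol 0)"
  by (auto simp: dol_str_def nth_append)

lemma dol_less_app: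
  fixes U1 U2 :: "'a::linorder list"
  assumes "dol_str U1 < dol_str U2"
  shows "dol_str U1 @ z < dol_str U2"
proof -
  obtain p where p: "p \<le> length U1" "p < length U2" "take p U1 = take p U2" "p = length U1 \<or> U1!p < U2!p"
    using dol_str_less[OF assms] by blast
  show ?thesis
  proof (rule lex_idx[of p])
    show "p < length (dol_str U1 @ z)" "p < length (dol_str U2)" using p by (auto simp: dol_str_def)
    show "\<forall>i<p. (dol_str U1 @ z) ! i = dol_str U2 ! i"
    proof (intro allI impI)
      fix i assume "i < p"
      then have "U1!i = U2!i" using p(3) by (metis nth_take)
      then show "(dol_str U1 @ z) ! i = dol_str U2 ! i" using \<open>i<p\<close> p
        by (auto simp: nth_append nth_dol_str dol_str_def)
    qed
    show "(dol_str U1 @ z) ! p < dol_str U2 ! p" using p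
      by (auto simp: nth_append nth_dol_str dol_str_def)
  qed
qed

lemma rot_in_all_rots:
  assumes "T \<in># M" "suffix U T"
  shows "\<exists>R. R \<in># all_rots M \<and> prefix (dol_str U) R"
proof -
  obtain W where W: "T = W @ U" using assms(2) by (auto simp: suffix_def)
  have "dol_str T = map Ch W @ dol_str U" using W by (simp add: dol_str_def)
  then have "rotate (length W) (dol_str T) = dol_str U @ map Ch W"
    by (metis length_map rotate_append)
  moreover have "rotate (length W) (dol_str T) \<in> set (rotations (dol_str T))"
    unfolding rotations_def using W by (auto simp: dol_str_def intro!: image_eqI[where x="length W"])
  ultimately show ?thesis using assms(1) unfolding all_rots_def in_sum_mset_iff
    by (metis in_multiset_in_set prefix_def)
qed

lemma int_b_mono:
  fixes U1 U2 :: "'a::linorder list"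
  assumes lt: "dol_str U1 < dol_str U2" and T: "T \<in># M" "suffix U1 T"
  shows "int_b M U1 < int_b M U2"
proof -
  define P where "P = (\<lambda>R. R < dol_str U1 \<and> \<not> prefix (dol_str U1) R)"
  define Q where "Q = (\<lambda>R. R < dol_str U2 \<and> \<not> prefix (dol_str U2) R)"
  define A where "A = all_rots M"
  have PQ: "P R \<Longrightarrow> Q R" for R
    unfolding P_def Q_def using lt prefix_le by (metis dual_order.strict_trans leD)
  obtain R where R: "R \<in># A" "prefix (dol_str U1) R" using rot_in_all_rots[OF T] A_def by blast
  have QR: "Q R \<and> \<not> P R"
  proof -
    obtain z where z: "R = dol_str U1 @ z" using R(2) by (auto simp: prefix_def)
    have "R < dol_str U2" using dol_less_app[OF lt] z by simp
    then show ?thesis unfolding Q_def P_def using R(2) prefix_le by (metis leD)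
  qed
  have part: "filter_mset Q A = filter_mset P (filter_mset Q A) + filter_mset (\<lambda>x. \<not> P x) (filter_mset Q A)"
    by (rule multiset_partition)
  have e1: "filter_mset P (filter_mset Q A) = filter_mset P A"
    using PQ by (auto simp: filter_filter_mset intro!: filter_mset_cong)
  have "R \<in># filter_mset (\<lambda>x. \<not> P x) (filter_mset Q A)" using R(1) QR by simp
  then have "size (filter_mset (\<lambda>x. \<not> P x) (filter_mset Q A)) > 0"
    by (metis gr0I size_eq_0_iff_empty empty_iff set_mset_empty)
  then have "size (filter_mset P A) < size (filter_mset Q A)"
    using arg_cong[OF part, of size] e1 by simp
  then show ?thesis unfolding int_b_def P_def Q_def A_def by simp
qed

theorem count_interesting:
  "card {k. \<exists>a b. (k, a) \<in># items M \<and> (k, b) \<in># items M \<and> a \<noteq> b} \<le> c_M M"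
proof -
  define S where "S = {U. \<exists>T\<in>#M. \<exists>T'\<in>#M. suffix U T \<and> suffix U T' \<and> prec_char T U \<noteq> prec_char T' U}"
  define f where "f = (\<lambda>U. (int_b M U, int_e M U))"
  have finS: "finite S"
  proof (rule finite_subset)
    show "S \<subseteq> (\<Union>T\<in>set_mset M. set (suffixes T))" unfolding S_def by auto
  qed auto
  have sub1: "{k. \<exists>a b. (k, a) \<in># items M \<and> (k, b) \<in># items M \<and> a \<noteq> b} \<subseteq> dol_str ` S"
  proof
    fix k assume "k \<in> {k. \<exists>a b. (k, a) \<in># items M \<and> (k, b) \<in># items M \<and> a \<noteq> b}"
    then obtain a b where ab: "(k, a) \<in># items M" "(k, b) \<in># items M" "a \<noteq> b" by blast
    obtain T U where TU: "T \<in># M" "suffix U T" "k = dol_str U" "a = prec_char T U"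
      using ab(1) in_items by blast
    obtain T' U' where TU': "T' \<in># M" "suffix U' T'" "k = dol_str U'" "b = prec_char T' U'"
      using ab(2) in_items by blast
    have "U' = U" using TU(3) TU'(3) dol_str_inj by metis
    then show "k \<in> dol_str ` S" unfolding S_def using TU TU' ab(3) by blast
  qed
  have injf: "inj_on f S"
  proof (rule inj_onI)
    fix U1 U2 assume U: "U1 \<in> S" "U2 \<in> S" "f U1 = f U2"
    then have eq: "int_b M U1 = int_b M U2" by (simp add: f_def)
    obtain T1 where T1: "T1 \<in># M" "suffix U1 T1" using U(1) unfolding S_def by blast
    obtain T2 where T2: "T2 \<in># M" "suffix U2 T2" using U(2) unfolding S_def by blast
    show "U1 = U2"
    proof (rule ccontr)
      assume "U1 \<noteq> U2"
      then have "dol_str U1 \<noteq> dol_str U2" using dol_str_inj by metis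
      then have "dol_str U1 < dol_str U2 \<or> dol_str U2 < dol_str U1" by auto
      then show False using int_b_mono[OF _ T1] int_b_mono[OF _ T2] eq by fastforce
    qed
  qed
  have sub2: "f ` S \<subseteq> interesting_intervals M"
  proof
    fix x assume "x \<in> f ` S"
    then obtain U where U: "U \<in> S" "x = f U" by blast
    then obtain T T' where TT: "T \<in># M" "T' \<in># M" "suffix U T" "suffix U T'" "prec_char T U \<noteq> prec_char T' U"
      unfolding S_def by blast
    have "T \<noteq> T'" using TT(5) by auto
    have "T \<in># filter_mset (\<lambda>T. suffix U T) M" "T' \<in># filter_mset (\<lambda>T. suffix U T) M" using TT by auto
    then have "n_suff M U \<ge> 2" unfolding n_suff_def
    proof -
      assume a: "T \<in># filter_mset (\<lambda>T. suffix U T) M" "T' \<in># filter_mset (\<lambda>T. suffix U T) M"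
      obtain B' where B': "filter_mset (\<lambda>T. suffix U T) M = add_mset T B'"
        using multi_member_split[OF a(1)] by blast
      have "T' \<in># B'" using a(2) B' \<open>T \<noteq> T'\<close> by simp
      then have "size B' \<ge> 1" by (cases B') auto
      then show "2 \<le> size (filter_mset (\<lambda>T. suffix U T) M)" using B' by simp
    qed
    then show "x \<in> interesting_intervals M" unfolding interesting_intervals_def U(2) f_def
      using TT by blast
  qed
  have fin_int: "finite (interesting_intervals M)"
  proof -
    have "interesting_intervals M \<subseteq> f ` {U. \<exists>T\<in>#M. suffix U T}"
      unfolding interesting_intervals_def f_def by blast
    moreover have "finite {U. \<exists>T\<in>#M. suffix U T}"
      by (rule finite_subset[of _ "\<Union>T\<in>set_mset M. set (suffixes T)"]) auto
    ultimately show ?thesis by (meson finite_imageI finite_subset)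
  qed
  have "card {k. \<exists>a b. (k, a) \<in># items M \<and> (k, b) \<in># items M \<and> a \<noteq> b} \<le> card (dol_str ` S)"
    by (rule card_mono[OF finite_imageI[OF finS] sub1])
  also have "\<dots> \<le> card S" by (rule card_image_le[OF finS])
  also have "\<dots> = card (f ` S)" using card_image[OF injf] by simp
  also have "\<dots> \<le> card (interesting_intervals M)" by (rule card_mono[OF fin_int sub2])
  finally show ?thesis unfolding c_M_def .
qed



fun chpre :: "'a xchar list \<Rightarrow> 'a list" where
  "chpre [] = []"
| "chpre (Ch a # r) = a # chpre r"
| "chpre (Hash # r) = []"
| "chpre (Dol i # r) = []"

definition nonch :: "'a xchar \<Rightarrow> bool" where
  "nonch c = (case c of Ch _ \<Rightarrow> False | _ \<Rightarrow> True)"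

lemma nonch_simps[simp]: "\<not> nonch (Ch a)" "nonch (Dol i)" "nonch Hash"
  by (auto simp: nonch_def)

lemma chpre_decomp:
  "\<exists>x\<in>set R. nonch x \<Longrightarrow>
   R = map Ch (chpre R) @ R ! length (chpre R) # drop (Suc (length (chpre R))) R
   \<and> nonch (R ! length (chpre R)) \<and> length (chpre R) < length R"
proof (induction R)
  case Nil then show ?case by simp
next
  case (Cons x R)
  then show ?case by (cases x) auto
qed

lemma chpre_form: "nonch c \<Longrightarrow> chpre (map Ch V @ c # r) = V"
proof (induction V)
  case Nil then show ?case by (cases c) auto
next
  case (Cons a V) then show ?case by simp
qed

lemma chpre_form_nth: "(map Ch V @ c # r) ! length V = c"
  by (simp add: nth_append)

definition ren :: "'a xchar \<Rightarrow> 'a xchar" where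
  "ren c = (case c of Ch a \<Rightarrow> Ch a | _ \<Rightarrow> Dol 0)"

lemma ren_simps[simp]: "ren (Ch a) = Ch a" "ren (Dol i) = Dol 0" "ren Hash = Dol 0"
  by (auto simp: ren_def)

fun blk :: "'a list \<times> nat \<Rightarrow> 'a xchar list" where
  "blk (T, s) = map Ch T @ [Dol s]"

definition text0 :: "('a list \<times> nat) list \<Rightarrow> 'a xchar list" where
  "text0 bs = concat (map blk bs)"

definition pitem :: "'a xchar list \<Rightarrow> nat \<Rightarrow> 'a list \<times> 'a xchar \<times> 'a xchar" where
  "pitem w i = (chpre (drop i w), drop i w ! length (chpre (drop i w)), if i = 0 then Dol 0 else ren (w ! (i - 1)))"

fun bitems :: "'a list \<times> nat \<Rightarrow> ('a list \<times> 'a xchar \<times> 'a xchar) list" where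
  "bitems (T, s) = map (\<lambda>q. (drop q T, Dol s, prec_char T (drop q T))) [0..<Suc (length T)]"

lemma blk_ne: "blk b \<noteq> []" by (cases b) auto

lemma last_blk: "nonch (last (blk b))" by (cases b) auto

lemma drop_blk_nonch: "i < length (blk b) \<Longrightarrow> \<exists>x\<in>set (drop i (blk b)). nonch x"
proof -
  assume i: "i < length (blk b)"
  then have ne: "drop i (blk b) \<noteq> []" by simp
  have "last (drop i (blk b)) = last (blk b)" using i by (simp add: last_drop)
  then have "nonch (last (drop i (blk b)))" using last_blk[of b] by simp
  moreover have "last (drop i (blk b)) \<in> set (drop i (blk b))" using ne by (rule last_in_set)
  ultimately show ?thesis by blast
qed

lemma pitem_left:
  assumes "i < length B" "B = blk b"
  shows "pitem (B @ w) i = pitem B i"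
proof -
  have ex: "\<exists>x\<in>set (drop i B). nonch x" using drop_blk_nonch assms by blast
  from chpre_decomp[OF ex] have d: "drop i B = map Ch (chpre (drop i B)) @ drop i B ! length (chpre (drop i B)) # drop (Suc (length (chpre (drop i B)))) (drop i B)"
    and n: "nonch (drop i B ! length (chpre (drop i B)))" by blast+
  have "drop i (B @ w) = drop i B @ w" using assms by simp
  also have "\<dots> = map Ch (chpre (drop i B)) @ drop i B ! length (chpre (drop i B)) # (drop (Suc (length (chpre (drop i B)))) (drop i B) @ w)"
    by (subst d) simp
  finally have dd: "drop i (B @ w) = \<dots>" .
  have c1: "chpre (drop i (B @ w)) = chpre (drop i B)" using dd chpre_form[OF n] by simp
  have c2: "drop i (B @ w) ! length (chpre (drop i B)) = drop i B ! length (chpre (drop i B))"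
    unfolding dd by (simp add: nth_append)
  have c3: "i \<noteq> 0 \<Longrightarrow> (B @ w) ! (i - 1) = B ! (i - 1)"
  proof -
    assume "i \<noteq> 0"
    then have "i - 1 < length B" using assms by simp
    then show ?thesis by (simp add: nth_append)
  qed
  show ?thesis unfolding pitem_def using c1 c2 c3 by simp
qed

lemma pitem_right:
  assumes "B = blk b"
  shows "pitem (B @ w) (length B + i) = pitem w i"
proof -
  have Bne: "B \<noteq> []" using blk_ne[of b] assms by simp
  have d: "drop (length B + i) (B @ w) = drop i w" by simp
  have p: "(if length B + i = 0 then Dol 0 else ren ((B @ w) ! (length B + i - 1)))
         = (if i = 0 then Dol 0 else ren (w ! (i - 1)))"
  proof (cases "i = 0")
    case True
    have "(B @ w) ! (length B - 1) = last B" using Bne by (simp add: nth_append last_conv_nth)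
    moreover have "ren (last B) = Dol 0" using last_blk[of b] assms
      by (cases "last B") (auto simp: nonch_def)
    ultimately show ?thesis using True Bne by simp
  next
    case False
    then have "length B + i - 1 = length B + (i - 1)" by simp
    then have "(B @ w) ! (length B + i - 1) = w ! (i - 1)"
      by (simp only: nth_append_length_plus)
    then show ?thesis using False by simp
  qed
  show ?thesis unfolding pitem_def d using p by simp
qed

lemma pitem_single:
  "map (pitem (blk b)) [0..<length (blk b)] = bitems b"
proof (cases b)
  case (Pair T s)
  have "pitem (blk (T, s)) q = (drop q T, Dol s, prec_char T (drop q T))" if "q < Suc (length T)" for q
  proof -
    have d: "drop q (blk (T, s)) = map Ch (drop q T) @ Dol s # []" using that by (simp add: drop_map)
    have p: "prec_char T (drop q T) = (if q = 0 then Dol 0 else Ch (T ! (q - 1)))"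
    proof (cases "q = 0")
      case True then show ?thesis by (simp add: prec_char_def)
    next
      case False
      then have "length (drop q T) < length T" using that by simp
      then have "drop q T \<noteq> T" by (metis less_irrefl)
      moreover have "length T - length (drop q T) - 1 = q - 1" using that by simp
      ultimately show ?thesis using False by (simp add: prec_char_def)
    qed
    show ?thesis unfolding pitem_def d using p that
      by (auto simp: chpre_form chpre_form_nth nth_append)
  qed
  then show ?thesis using Pair by (auto intro!: map_cong simp del: upt_Suc)
qed

lemma pitem_text0:
  "mset (map (pitem (text0 bs)) [0..<length (text0 bs)]) = mset (concat (map bitems bs))"
proof (induction bs)
  case Nil then show ?case by (simp add: text0_def)
next
  case (Cons b bs)
  define B where "B = blk b"
  define w where "w = text0 bs"
  have t: "text0 (b # bs) = B @ w" by (simp add: text0_def B_def w_def)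
  have u: "[0..<length (B @ w)] = [0..<length B] @ map (\<lambda>i. length B + i) [0..<length w]"
    by (simp add: upt_add_eq_append[of 0 "length B"] map_add_upt add.commute)
  have "map (pitem (B @ w)) [0..<length B] = map (pitem B) [0..<length B]"
    by (rule map_cong[OF refl]) (simp add: pitem_left[OF _ B_def])
  then have l: "map (pitem (B @ w)) [0..<length B] = bitems b"
    using pitem_single[of b] B_def by simp
  have r: "map (pitem (B @ w)) (map (\<lambda>i. length B + i) [0..<length w]) = map (pitem w) [0..<length w]"
    using pitem_right[OF B_def] by simp
  show ?case unfolding t u map_append mset_append l r using Cons.IH w_def by simp
qed

lemma last_text0: "bs \<noteq> [] \<Longrightarrow> nonch (last (text0 bs))"
proof (induction bs)
  case Nil then show ?case by simp
next
  case (Cons b bs)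
  then show ?case using last_blk[of b] blk_ne[of b]
    by (cases "bs = []") (auto simp: text0_def last_append)
qed

lemma text0_Nil: "text0 bs = [] \<longleftrightarrow> bs = []"
  by (cases bs) (auto simp: text0_def blk_ne)

lemma pitem_in: "i < length (text0 bs) \<Longrightarrow> pitem (text0 bs) i \<in> set (concat (map bitems bs))"
proof -
  assume "i < length (text0 bs)"
  then have "pitem (text0 bs) i \<in> set (map (pitem (text0 bs)) [0..<length (text0 bs)])" by simp
  then show ?thesis using arg_cong[OF pitem_text0[of bs], of set_mset] by simp
qed

lemma bitems_mid: "x \<in> set (concat (map bitems bs)) \<Longrightarrow> \<exists>s. fst (snd x) = Dol s"
proof -
  assume "x \<in> set (concat (map bitems bs))"
  then obtain b where b: "x \<in> set (bitems b)" by auto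
  obtain T s where "b = (T, s)" by (cases b)
  then show ?thesis using b by auto
qed

lemma drop_text0_form:
  assumes "i < length (text0 bs)"
  shows "\<exists>s r. drop i (text0 bs) = map Ch (fst (pitem (text0 bs) i)) @ Dol s # r
        \<and> fst (snd (pitem (text0 bs) i)) = Dol s"
proof -
  define w where "w = text0 bs"
  have "bs \<noteq> []"
  proof
    assume "bs = []" then show False using assms by (simp add: text0_def)
  qed
  then have n: "nonch (last w)" unfolding w_def by (rule last_text0)
  have l: "last (drop i w) = last w" using assms unfolding w_def by (simp add: last_drop)
  have ne: "drop i w \<noteq> []" using assms unfolding w_def by simp
  have "last (drop i w) \<in> set (drop i w)" using ne by (rule last_in_set)
  then have ex: "\<exists>x\<in>set (drop i w). nonch x" using n l by auto
  obtain s where s: "fst (snd (pitem w i)) = Dol s" using bitems_mid[OF pitem_in[OF assms]] unfolding w_def by blast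
  have "drop i w = map Ch (fst (pitem w i)) @ fst (snd (pitem w i)) # drop (Suc (length (chpre (drop i w)))) (drop i w)"
    using chpre_decomp[OF ex] by (simp add: pitem_def)
  then have "drop i w = map Ch (fst (pitem w i)) @ Dol s # drop (Suc (length (chpre (drop i w)))) (drop i w)"
    using s by simp
  then show ?thesis using s unfolding w_def by blast
qed



lemma rot_form:
  assumes "i < length (text0 bs)"
  shows "\<exists>s r. rotate i (text0 bs @ z) = map Ch (fst (pitem (text0 bs) i)) @ Dol s # r
           \<and> fst (snd (pitem (text0 bs) i)) = Dol s"
    and "last (rotate i (text0 bs @ z)) = (if i = 0 then last (text0 bs @ z) else text0 bs ! (i - 1))"
proof -
  define w where "w = text0 bs"
  define t where "t = w @ z"
  have il: "i < length t" using assms unfolding t_def w_def by simp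
  have rt: "rotate i t = drop i w @ z @ take i t"
    using il assms unfolding t_def w_def by (simp add: rotate_drop_take)
  obtain s r where sr: "drop i w = map Ch (fst (pitem w i)) @ Dol s # r" "fst (snd (pitem w i)) = Dol s"
    using drop_text0_form[OF assms] unfolding w_def by blast
  show "\<exists>s r. rotate i (text0 bs @ z) = map Ch (fst (pitem (text0 bs) i)) @ Dol s # r
           \<and> fst (snd (pitem (text0 bs) i)) = Dol s"
    using rt sr unfolding t_def w_def by auto
  show "last (rotate i (text0 bs @ z)) = (if i = 0 then last (text0 bs @ z) else text0 bs ! (i - 1))"
  proof (cases "i = 0")
    case True then show ?thesis by simp
  next
    case False
    then have "take i t \<noteq> []" using il by (cases t) auto
    then have "last (rotate i t) = last (take i t)" using rt by simp
    also have "\<dots> = take i t ! (i - 1)" using \<open>take i t \<noteq> []\<close> il by (simp add: last_conv_nth min_def)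
    also have "\<dots> = t ! (i - 1)" using False by simp
    also have "\<dots> = w ! (i - 1)"
    proof -
      have "i - 1 < length w" using assms unfolding w_def by simp
      then show ?thesis unfolding t_def by (simp add: nth_append)
    qed
    finally show ?thesis using False unfolding t_def w_def by simp
  qed
qed

definition itm :: "('a xchar \<Rightarrow> 'a xchar) \<Rightarrow> 'a xchar list \<Rightarrow> 'a xchar list \<times> 'a xchar" where
  "itm f R = (dol_str (chpre R), f (last R))"

definition proj :: "'a list \<times> 'a xchar \<times> 'a xchar \<Rightarrow> 'a xchar list \<times> 'a xchar" where
  "proj x = (dol_str (fst x), snd (snd x))"

lemma itm_rot:
  assumes "i < length (text0 bs)"
    and f1: "f (last (text0 bs @ z)) = Dol 0"
    and f2: "\<forall>c\<in>set (text0 bs). f c = ren c"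
  shows "itm f (rotate i (text0 bs @ z)) = proj (pitem (text0 bs) i)"
proof -
  obtain s r where sr: "rotate i (text0 bs @ z) = map Ch (fst (pitem (text0 bs) i)) @ Dol s # r"
    using rot_form(1)[OF assms(1)] by blast
  have c: "chpre (rotate i (text0 bs @ z)) = fst (pitem (text0 bs) i)"
    using sr chpre_form[of "Dol s"] by simp
  have l: "f (last (rotate i (text0 bs @ z))) = snd (snd (pitem (text0 bs) i))"
  proof (cases "i = 0")
    case True then show ?thesis using rot_form(2)[OF assms(1)] f1 by (simp add: pitem_def)
  next
    case False
    have "text0 bs ! (i - 1) \<in> set (text0 bs)" using assms(1) by simp
    then show ?thesis using False rot_form(2)[OF assms(1)] f2 by (simp add: pitem_def)
  qed
  show ?thesis using c l by (simp add: itm_def proj_def)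
qed

lemma proj_bitems: "map proj (bitems b) = itemsT (fst b)"
  by (cases b) (simp add: itemsT_def proj_def)

lemma mset_proj_bitems: "mset (map proj (concat (map bitems bs))) = items (mset (map fst bs))"
  by (induction bs) (simp_all add: items_def proj_bitems)

lemma mset_itm_rots:
  assumes f1: "f (last (text0 bs @ z)) = Dol 0"
    and f2: "\<forall>c\<in>set (text0 bs). f c = ren c"
  shows "mset (map (itm f) (map (\<lambda>i. rotate i (text0 bs @ z)) [0..<length (text0 bs)]))
       = items (mset (map fst bs))"
proof -
  have "map (itm f) (map (\<lambda>i. rotate i (text0 bs @ z)) [0..<length (text0 bs)])
      = map proj (map (pitem (text0 bs)) [0..<length (text0 bs)])"
    using itm_rot[OF _ f1 f2] by simp
  then show ?thesis using pitem_text0[of bs] mset_proj_bitems[of bs]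
    by (metis mset_map)
qed

lemma first_diff:
  fixes V1 V2 :: "'a::linorder list"
  assumes "dol_str V2 < dol_str V1"
    and R1: "R1 = map Ch V1 @ Dol s1 # r1" and R2: "R2 = map Ch V2 @ Dol s2 # r2"
  shows "\<exists>p. p < length R1 \<and> p < length R2 \<and> (\<forall>i<p. R2 ! i = R1 ! i) \<and> R2 ! p < R1 ! p"
proof -
  obtain p where p: "p \<le> length V2" "p < length V1" "take p V2 = take p V1" "p = length V2 \<or> V2!p < V1!p"
    using dol_str_less[OF assms(1)] by blast
  have "\<forall>i<p. R2 ! i = R1 ! i"
  proof (intro allI impI)
    fix i assume "i < p"
    then have "V2 ! i = V1 ! i" using p(3) by (metis nth_take)
    then show "R2 ! i = R1 ! i" using \<open>i < p\<close> p R1 R2 by (simp add: nth_append)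
  qed
  moreover have "R2 ! p < R1 ! p" using p R1 R2 by (auto simp: nth_append)
  moreover have "p < length R1" "p < length R2" using p R1 R2 by auto
  ultimately show ?thesis by blast
qed

lemma key_mono:
  fixes V1 V2 :: "'a::linorder list"
  assumes R1: "R1 = map Ch V1 @ Dol s1 # r1" and R2: "R2 = map Ch V2 @ Dol s2 # r2"
    and le: "R1 \<le> R2"
  shows "dol_str V1 \<le> dol_str V2" and "V1 = V2 \<Longrightarrow> s1 \<le> s2"
proof -
  show "dol_str V1 \<le> dol_str V2"
  proof (rule ccontr)
    assume "\<not> dol_str V1 \<le> dol_str V2"
    then have "dol_str V2 < dol_str V1" by simp
    then obtain p where "p < length R1" "p < length R2" "\<forall>i<p. R2 ! i = R1 ! i" "R2 ! p < R1 ! p"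
      using first_diff[OF _ R1 R2] by blast
    then have "R2 < R1" using lex_idx by blast
    then show False using le by simp
  qed
  assume V: "V1 = V2"
  show "s1 \<le> s2"
  proof (rule ccontr)
    assume "\<not> s1 \<le> s2"
    then have "R2 < R1"
      by (intro lex_idx[of "length V1"]) (use R1 R2 V in \<open>auto simp: nth_append\<close>)
    then show False using le by simp
  qed
qed

lemma omega_key:
  fixes V1 V2 :: "'a::linorder list"
  assumes R1: "R1 = map Ch V1 @ Dol s1 # r1" and R2: "R2 = map Ch V2 @ Dol s2 # r2"
    and lt: "dol_str V2 < dol_str V1"
  shows "omega_less R2 R1"
proof -
  obtain p where p: "p < length R1" "p < length R2" "\<forall>i<p. R2 ! i = R1 ! i" "R2 ! p < R1 ! p"
    using first_diff[OF lt R1 R2] by blast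
  have "lex_less_inf (omega R2) (omega R1)"
    unfolding lex_less_inf_def omega_def using p by (intro exI[of _ p]) auto
  then show ?thesis by (simp add: omega_less_def)
qed

lemma set_text0: "c \<in> set (text0 bs) \<Longrightarrow> (\<exists>a. c = Ch a) \<or> (\<exists>T s. (T, s) \<in> set bs \<and> c = Dol s)"
  by (auto simp: text0_def)



definition condB :: "('a::linorder list \<times> 'a xchar \<times> 'a xchar) list \<Rightarrow> bool" where
  "condB B \<longleftrightarrow> (\<forall>V s1 s2 p1 p2. (V, Dol s1, p1) \<in> set B \<and> (V, Dol s2, p2) \<in> set B \<and> s1 \<le> s2 \<longrightarrow> p1 \<le> p2)"

definition goodR :: "('a xchar \<Rightarrow> 'a xchar) \<Rightarrow> ('a list \<times> 'a xchar \<times> 'a xchar) list \<Rightarrow> 'a xchar list \<Rightarrow> bool" where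
  "goodR f B R \<longleftrightarrow> (\<exists>V s r p. R = map Ch V @ Dol s # r \<and> (V, Dol s, p) \<in> set B \<and> itm f R = (dol_str V, p))"

lemma sorted_itm:
  fixes Rs :: "'a::linorder xchar list list"
  assumes s: "sorted Rs" and g: "\<forall>R\<in>set Rs. goodR f B R"
  shows "sorted_wrt (\<lambda>x y. fst x \<le> fst y) (map (itm f) Rs)"
    and "condB B \<Longrightarrow> sorted_wrt (\<lambda>x y. fst x < fst y \<or> (fst x = fst y \<and> snd x \<le> snd y)) (map (itm f) Rs)"
proof -
  have s': "sorted_wrt (\<le>) Rs" using s by simp
  show "sorted_wrt (\<lambda>x y. fst x \<le> fst y) (map (itm f) Rs)"
    unfolding sorted_wrt_map
  proof (rule sorted_wrt_mono_rel[OF _ s'])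
    fix R1 R2 assume R: "R1 \<in> set Rs" "R2 \<in> set Rs" "R1 \<le> R2"
    obtain V1 s1 r1 p1 where 1: "R1 = map Ch V1 @ Dol s1 # r1" "itm f R1 = (dol_str V1, p1)"
      using g R(1) unfolding goodR_def by blast
    obtain V2 s2 r2 p2 where 2: "R2 = map Ch V2 @ Dol s2 # r2" "itm f R2 = (dol_str V2, p2)"
      using g R(2) unfolding goodR_def by blast
    show "fst (itm f R1) \<le> fst (itm f R2)" using key_mono(1)[OF 1(1) 2(1) R(3)] 1 2 by simp
  qed
  assume c: "condB B"
  show "sorted_wrt (\<lambda>x y. fst x < fst y \<or> (fst x = fst y \<and> snd x \<le> snd y)) (map (itm f) Rs)"
    unfolding sorted_wrt_map
  proof (rule sorted_wrt_mono_rel[OF _ s'])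
    fix R1 R2 assume R: "R1 \<in> set Rs" "R2 \<in> set Rs" "R1 \<le> R2"
    obtain V1 s1 r1 p1 where 1: "R1 = map Ch V1 @ Dol s1 # r1" "(V1, Dol s1, p1) \<in> set B" "itm f R1 = (dol_str V1, p1)"
      using g R(1) unfolding goodR_def by blast
    obtain V2 s2 r2 p2 where 2: "R2 = map Ch V2 @ Dol s2 # r2" "(V2, Dol s2, p2) \<in> set B" "itm f R2 = (dol_str V2, p2)"
      using g R(2) unfolding goodR_def by blast
    have k: "dol_str V1 \<le> dol_str V2" by (rule key_mono(1)[OF 1(1) 2(1) R(3)])
    show "fst (itm f R1) < fst (itm f R2) \<or> (fst (itm f R1) = fst (itm f R2) \<and> snd (itm f R1) \<le> snd (itm f R2))"
    proof (cases "V1 = V2")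
      case True
      then have "s1 \<le> s2" using key_mono(2)[OF 1(1) 2(1) R(3)] by simp
      then have "p1 \<le> p2" using c 1(2) 2(2) True unfolding condB_def by blast
      then show ?thesis using 1 2 True by simp
    next
      case False
      then have "dol_str V1 \<noteq> dol_str V2" using dol_str_inj by metis
      then show ?thesis using k 1 2 by simp
    qed
  qed
qed

lemma good_rots:
  assumes f1: "f (last (text0 bs @ z)) = Dol 0"
    and f2: "\<forall>c\<in>set (text0 bs). f c = ren c"
    and R: "R \<in> set (map (\<lambda>i. rotate i (text0 bs @ z)) [0..<length (text0 bs)])"
  shows "goodR f (concat (map bitems bs)) R"
proof -
  obtain i where i: "i < length (text0 bs)" "R = rotate i (text0 bs @ z)" using R by auto
  obtain s r where sr: "R = map Ch (fst (pitem (text0 bs) i)) @ Dol s # r" "fst (snd (pitem (text0 bs) i)) = Dol s"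
    using rot_form(1)[OF i(1), of z] i(2) by blast
  have m: "pitem (text0 bs) i \<in> set (concat (map bitems bs))" by (rule pitem_in[OF i(1)])
  have it: "itm f R = proj (pitem (text0 bs) i)" using itm_rot[OF i(1) f1 f2] i(2) by simp
  obtain V c p where P: "pitem (text0 bs) i = (V, c, p)" by (cases "pitem (text0 bs) i") auto
  show ?thesis unfolding goodR_def using sr m it P by (intro exI[of _ V] exI[of _ s] exI[of _ r] exI[of _ p]) (auto simp: proj_def)
qed



lemma prec_mono:
  fixes T1 T2 V :: "'a::linorder list"
  assumes "suffix V T1" "suffix V T2" "rev T1 \<le> rev T2"
  shows "prec_char T1 V \<le> prec_char T2 V"
proof -
  obtain A1 where A1: "T1 = A1 @ V" using assms(1) by (auto simp: suffix_def)
  obtain A2 where A2: "T2 = A2 @ V" using assms(2) by (auto simp: suffix_def)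
  have r: "rev A1 \<le> rev A2" using assms(3) A1 A2 append_le_append_iff[of "rev V" "rev A1" "rev A2"] by simp
  have pc: "prec_char (A @ V) V = (if A = [] then Dol 0 else Ch (last A))" for A :: "'a list"
  proof (cases "A = []")
    case True then show ?thesis by (simp add: prec_char_def)
  next
    case False
    then have "A @ V \<noteq> V" by simp
    moreover have "(A @ V) ! (length (A @ V) - length V - 1) = last A"
      using False by (simp add: nth_append last_conv_nth)
    ultimately show ?thesis using False by (simp add: prec_char_def)
  qed
  show ?thesis
  proof (cases "A1 = []")
    case True
    then show ?thesis unfolding A1 A2 pc by simp
  next
    case False
    then have "A2 \<noteq> []" using r by auto
    obtain B1 where B1: "rev A1 = last A1 # B1" using False by (cases "rev A1") (auto simp: last_rev[symmetric] hd_rev)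
    obtain B2 where B2: "rev A2 = last A2 # B2" using \<open>A2 \<noteq> []\<close> by (cases "rev A2") (auto simp: last_rev[symmetric] hd_rev)
    have "last A1 \<le> last A2" using r B1 B2 by auto
    then show ?thesis unfolding A1 A2 pc using False \<open>A2 \<noteq> []\<close> by simp
  qed
qed

lemma enum_items:
  assumes "(V, Dol s, p) \<in> set (concat (map bitems (map (\<lambda>(j, T). (T, Suc j)) (enumerate 0 xs))))"
  shows "\<exists>j<length xs. s = Suc j \<and> suffix V (xs ! j) \<and> p = prec_char (xs ! j) V"
proof -
  obtain jT where jT: "jT \<in> set (enumerate 0 xs)" "(V, Dol s, p) \<in> set (bitems ((\<lambda>(j, T). (T, Suc j)) jT))"
    using assms by auto
  obtain j T where e: "jT = (j, T)" by (cases jT)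
  have j: "j < length xs" "T = xs ! j" using jT(1) e by (auto simp: in_set_enumerate_eq)
  obtain q where q: "V = drop q T" "s = Suc j" "p = prec_char T (drop q T)" using jT(2) e by (auto simp del: upt_Suc)
  show ?thesis using j q suffix_drop by blast
qed

lemma colex_cond:
  fixes xs :: "'a::linorder list list"
  assumes "sorted (map rev xs)"
  shows "condB (concat (map bitems (map (\<lambda>(j, T). (T, Suc j)) (enumerate 0 xs))))"
  unfolding condB_def
proof (intro allI impI, elim conjE)
  fix V s1 s2 p1 p2
  assume 1: "(V, Dol s1, p1) \<in> set (concat (map bitems (map (\<lambda>(j, T). (T, Suc j)) (enumerate 0 xs))))"
    and 2: "(V, Dol s2, p2) \<in> set (concat (map bitems (map (\<lambda>(j, T). (T, Suc j)) (enumerate 0 xs))))"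
    and le: "s1 \<le> s2"
  obtain j1 where j1: "j1 < length xs" "s1 = Suc j1" "suffix V (xs ! j1)" "p1 = prec_char (xs ! j1) V"
    using enum_items[OF 1] by blast
  obtain j2 where j2: "j2 < length xs" "s2 = Suc j2" "suffix V (xs ! j2)" "p2 = prec_char (xs ! j2) V"
    using enum_items[OF 2] by blast
  have "map rev xs ! j1 \<le> map rev xs ! j2"
    using sorted_nth_mono[OF assms, of j1 j2] le j1 j2 by simp
  then have "rev (xs ! j1) \<le> rev (xs ! j2)" using j1 j2 by simp
  then show "p1 \<le> p2" using prec_mono j1 j2 by simp
qed

definition lexrel :: "'a::linorder xchar list \<times> 'a xchar \<Rightarrow> 'a xchar list \<times> 'a xchar \<Rightarrow> bool" where
  "lexrel x y \<longleftrightarrow> fst x < fst y \<or> (fst x = fst y \<and> snd x \<le> snd y)"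

lemma mdol_repr:
  fixes xs :: "'a::linorder list list"
  shows "\<exists>ys. mset ys = items (mset xs) \<and> sorted_wrt (\<lambda>x y. fst x \<le> fst y) ys \<and> mdolBWT xs = map snd ys
     \<and> (sorted (map rev xs) \<longrightarrow> sorted_wrt lexrel ys)"
proof (cases "xs = []")
  case True
  then show ?thesis by (intro exI[of _ "[]"]) (simp add: mdolBWT_def bwt_def rotations_def items_def)
next
  case False
  define bs where "bs = map (\<lambda>(j, T). (T, Suc j)) (enumerate 0 xs)"
  define w where "w = text0 bs"
  have tw: "concat (map (\<lambda>(j, T). map Ch T @ [Dol (Suc j)]) (enumerate 0 xs)) = w"
    unfolding w_def text0_def bs_def by (auto intro!: arg_cong[where f=concat])
  have fb: "map fst bs = xs" unfolding bs_def by (simp add: case_prod_beta o_def)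
  have bne: "bs \<noteq> []" using False unfolding bs_def by (cases xs) auto
  have wne: "w \<noteq> []" using bne text0_Nil unfolding w_def by blast
  have f2: "\<forall>c\<in>set (text0 bs). ren_dol c = ren c"
  proof
    fix c assume "c \<in> set (text0 bs)"
    then show "ren_dol c = ren c" using set_text0[of c bs] by (auto simp: ren_dol_def)
  qed
  have f1: "ren_dol (last (text0 bs @ [])) = Dol 0"
  proof -
    have "last w \<in> set w" using wne by simp
    moreover have "nonch (last w)" using last_text0[OF bne] w_def by simp
    ultimately have "ren_dol (last w) = ren (last w)" "ren (last w) = Dol 0"
      using f2 w_def by (auto simp: ren_def nonch_def split: xchar.splits)
    then show ?thesis using w_def by simp
  qed
  define Ls where "Ls = map (\<lambda>i. rotate i (text0 bs @ [])) [0..<length (text0 bs)]"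
  have rw: "rotations w = Ls" unfolding rotations_def Ls_def w_def by simp
  define ys where "ys = map (itm ren_dol) (sort Ls)"
  have "mset (map (itm ren_dol) Ls) = items (mset (map fst bs))"
    unfolding Ls_def by (rule mset_itm_rots[OF f1 f2])
  moreover have "mset ys = mset (map (itm ren_dol) Ls)" unfolding ys_def by (simp only: mset_map mset_sort)
  ultimately have m: "mset ys = items (mset xs)" using fb by simp
  have g: "\<forall>R\<in>set (sort Ls). goodR ren_dol (concat (map bitems bs)) R"
    using good_rots[OF f1 f2] unfolding Ls_def by simp
  have s1: "sorted_wrt (\<lambda>x y. fst x \<le> fst y) ys"
    unfolding ys_def by (rule sorted_itm(1)[OF sorted_sort g])
  have s2: "sorted (map rev xs) \<longrightarrow> sorted_wrt lexrel ys"
    using sorted_itm(2)[OF sorted_sort g] colex_cond[of xs] unfolding ys_def lexrel_def bs_def by simp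
  have e: "mdolBWT xs = map snd ys"
    unfolding mdolBWT_def tw bwt_def rw ys_def by (simp add: itm_def)
  show ?thesis using m s1 s2 e by blast
qed



lemma conc_repr:
  fixes xs :: "'a::linorder list list"
  shows "\<exists>ys. mset ys = items (mset xs) \<and> sorted_wrt (\<lambda>x y. fst x \<le> fst y) ys \<and> concBWT xs = map snd ys"
proof -
  define bs where "bs = map (\<lambda>T. (T, 0::nat)) xs"
  define w where "w = text0 bs"
  have cw: "concat (map dol_str xs) = w" unfolding w_def text0_def bs_def by (induction xs) (auto simp: dol_str_def)
  have fb: "map fst bs = xs" unfolding bs_def by (induction xs) auto
  define t where "t = w @ [Hash]"
  define L0 where "L0 = map (\<lambda>i. rotate i (text0 bs @ [Hash])) [0..<length (text0 bs)]"
  define h where "h = Hash # w"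
  have rt: "rotations t = L0 @ [h]"
  proof -
    have "rotate (length w) t = h" unfolding t_def h_def using rotate_append[of w "[Hash]"] by simp
    then show ?thesis unfolding rotations_def L0_def t_def w_def by simp
  qed
  have f2: "\<forall>c\<in>set (text0 bs). ren_hash c = ren c"
  proof
    fix c assume "c \<in> set (text0 bs)"
    then show "ren_hash c = ren c" using set_text0[of c bs] unfolding bs_def by (auto simp: ren_hash_def)
  qed
  have f1: "ren_hash (last (text0 bs @ [Hash])) = Dol 0" by (simp add: ren_hash_def)
  have hl: "\<forall>R\<in>set L0. h < R"
  proof
    fix R assume "R \<in> set L0"
    then obtain i where i: "i < length (text0 bs)" "R = rotate i (text0 bs @ [Hash])" unfolding L0_def by auto
    obtain s r where sr: "R = map Ch (fst (pitem (text0 bs) i)) @ Dol s # r"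
      using rot_form(1)[OF i(1), of "[Hash]"] i(2) by blast
    show "h < R" unfolding h_def sr by (cases "fst (pitem (text0 bs) i)") auto
  qed
  have so: "sort (L0 @ [h]) = h # sort L0"
  proof (rule properties_for_sort)
    show "mset (h # sort L0) = mset (L0 @ [h])" by simp
    show "sorted (h # sort L0)" using hl by (auto simp: less_imp_le)
  qed
  define ys where "ys = map (itm ren_hash) (sort L0)"
  have "mset (map (itm ren_hash) L0) = items (mset (map fst bs))"
    unfolding L0_def by (rule mset_itm_rots[OF f1 f2])
  moreover have "mset ys = mset (map (itm ren_hash) L0)" unfolding ys_def by (simp only: mset_map mset_sort)
  ultimately have m: "mset ys = items (mset xs)" using fb by simp
  have g: "\<forall>R\<in>set (sort L0). goodR ren_hash (concat (map bitems bs)) R"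
    using good_rots[OF f1 f2] unfolding L0_def by simp
  have s1: "sorted_wrt (\<lambda>x y. fst x \<le> fst y) ys"
    unfolding ys_def by (rule sorted_itm(1)[OF sorted_sort g])
  have e: "concBWT xs = map snd ys"
    unfolding concBWT_def cw bwt_def t_def[symmetric] rt so ys_def by (simp add: itm_def)
  show ?thesis using m s1 e by blast
qed

definition idx :: "'a xchar \<Rightarrow> 'a xchar" where "idx c = c"

lemma rots_single:
  fixes T :: "'a::linorder list"
  shows "mset (map (itm idx) (rotations (dol_str T))) = mset (itemsT T)"
    and "R \<in> set (rotations (dol_str T)) \<Longrightarrow> goodR idx (concat (map bitems [(T, 0)])) R"
proof -
  have d: "dol_str T = text0 [(T, 0)] @ []" by (simp add: text0_def dol_str_def)
  have f2: "\<forall>c\<in>set (text0 [(T, 0)]). idx c = ren c"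
  proof
    fix c assume "c \<in> set (text0 [(T, 0::nat)])"
    then show "idx c = ren c" using set_text0[of c "[(T, 0::nat)]"] by (auto simp: idx_def)
  qed
  have f1: "idx (last (text0 [(T, 0)] @ [])) = Dol 0" by (simp add: text0_def idx_def)
  have r: "rotations (dol_str T) = map (\<lambda>i. rotate i (text0 [(T, 0)] @ [])) [0..<length (text0 [(T, 0)])]"
    unfolding rotations_def d by simp
  show "mset (map (itm idx) (rotations (dol_str T))) = mset (itemsT T)"
    unfolding r using mset_itm_rots[OF f1 f2] by (simp add: items_def)
  assume "R \<in> set (rotations (dol_str T))"
  then show "goodR idx (concat (map bitems [(T, 0)])) R" unfolding r by (rule good_rots[OF f1 f2])
qed

lemma ebwt_repr:
  fixes M :: "'a::linorder list multiset"
  assumes "is_dolEBWT M L"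
  shows "\<exists>ys. mset ys = items M \<and> sorted_wrt (\<lambda>x y. fst x \<le> fst y) ys \<and> L = map snd ys"
proof -
  obtain xs where xs: "mset xs = (\<Sum>S\<in>#image_mset dol_str M. mset (rotations S))"
    "sorted_wrt (\<lambda>a b. \<not> omega_less b a) xs" "L = map last xs"
    using assms unfolding is_dolEBWT_def is_ebwt_def by blast
  define ys where "ys = map (itm idx) xs"
  have sumeq: "image_mset (itm idx) (\<Sum>S\<in>#image_mset dol_str N. mset (rotations S)) = items N" for N :: "'a list multiset"
  proof (induction N)
    case empty then show ?case by (simp add: items_def)
  next
    case (add x N)
    have "image_mset (itm idx) (mset (rotations (dol_str x))) = mset (itemsT x)"
      using rots_single(1)[of x] by simp
    then show ?case using add by (simp add: items_def)
  qed
  have m: "mset ys = items M" unfolding ys_def using xs(1) sumeq by simp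
  have e: "L = map snd ys" unfolding ys_def xs(3) by (simp add: itm_def idx_def)
  have gd: "\<exists>V s r p. R = map Ch V @ Dol s # r \<and> itm idx R = (dol_str V, p)" if "R \<in> set xs" for R
  proof -
    have "R \<in># (\<Sum>S\<in>#image_mset dol_str M. mset (rotations S))" using that xs(1) by (metis set_mset_mset)
    then obtain T where "T \<in># M" "R \<in> set (rotations (dol_str T))" by (auto simp: in_sum_mset_iff)
    then show ?thesis using rots_single(2) unfolding goodR_def by blast
  qed
  have s: "sorted_wrt (\<lambda>x y. fst x \<le> fst y) ys"
    unfolding ys_def sorted_wrt_map
  proof (rule sorted_wrt_mono_rel[OF _ xs(2)])
    fix a b assume ab: "a \<in> set xs" "b \<in> set xs" "\<not> omega_less b a"
    obtain Va sa ra pa where A: "a = map Ch Va @ Dol sa # ra" "itm idx a = (dol_str Va, pa)" using gd ab(1) by blast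
    obtain Vb sb rb pb where B: "b = map Ch Vb @ Dol sb # rb" "itm idx b = (dol_str Vb, pb)" using gd ab(2) by blast
    have "dol_str Va \<le> dol_str Vb"
    proof (rule ccontr)
      assume "\<not> dol_str Va \<le> dol_str Vb"
      then have "dol_str Vb < dol_str Va" by simp
      then have "omega_less b a" by (rule omega_key[OF A(1) B(1)])
      then show False using ab(3) by simp
    qed
    then show "fst (itm idx a) \<le> fst (itm idx b)" using A B by simp
  qed
  show ?thesis using m s e by blast
qed

lemma sep_repr:
  fixes M :: "'a::linorder list multiset"
  assumes "L \<in> sep_bwts M"
  shows "\<exists>ys. mset ys = items M \<and> sorted_wrt (\<lambda>x y. fst x \<le> fst y) ys \<and> L = map snd ys"
  using assms unfolding sep_bwts_def
proof (elim UnE)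
  assume "L \<in> {L. is_dolEBWT M L}"
  then show ?thesis using ebwt_repr by blast
next
  assume "L \<in> {mdolBWT xs |xs. mset xs = M}"
  then obtain xs where "mset xs = M" "L = mdolBWT xs" by blast
  then show ?thesis using mdol_repr[of xs] by metis
next
  assume "L \<in> {concBWT xs |xs. mset xs = M}"
  then obtain xs where "mset xs = M" "L = concBWT xs" by blast
  then show ?thesis using conc_repr[of xs] by metis
qed

theorem proposition2:
  fixes M :: "'a::linorder list multiset"
  shows "runs (colexBWT M) \<le> r_opt M + 2 * c_M M"
proof -
  define xs where "xs = colex_listing M"
  have mx: "mset xs = M" unfolding xs_def colex_listing_def by simp
  have sx: "sorted (map rev xs)" unfolding xs_def colex_listing_def by simp
  obtain yc where yc: "mset yc = items M" "sorted_wrt lexrel yc" "colexBWT M = map snd yc"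
    using mdol_repr[of xs] mx sx unfolding colexBWT_def xs_def[symmetric] by metis
  have cin: "colexBWT M \<in> sep_bwts M" unfolding sep_bwts_def colexBWT_def
    by (rule UnI1, rule UnI2) (use mx xs_def in auto)
  have fin: "finite (runs ` sep_bwts M)"
  proof (rule finite_subset)
    show "runs ` sep_bwts M \<subseteq> {..size (items M)}"
    proof
      fix n assume "n \<in> runs ` sep_bwts M"
      then obtain L where L: "L \<in> sep_bwts M" "n = runs L" by blast
      obtain ys where "mset ys = items M" "L = map snd ys" using sep_repr[OF L(1)] by blast
      then have "length L = size (items M)" by (metis length_map size_mset)
      then show "n \<in> {..size (items M)}" using L(2) remdups_adj_length[of L] by (simp add: runs_def)
    qed
  qed simp
  have "r_opt M \<in> runs ` sep_bwts M" unfolding r_opt_def using fin cin by (intro Min_in) auto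
  then obtain L where L: "L \<in> sep_bwts M" "r_opt M = runs L" by blast
  obtain ys where ys: "mset ys = items M" "sorted_wrt (\<lambda>x y. fst x \<le> fst y) ys" "L = map snd ys"
    using sep_repr[OF L(1)] by blast
  have yc': "sorted_wrt (\<lambda>x y. fst x < fst y \<or> (fst x = fst y \<and> snd x \<le> snd y)) yc"
    using yc(2) unfolding lexrel_def .
  have "runs (map snd yc) \<le> runs (map snd ys)
     + 2 * card {k. \<exists>a b. (k, a) \<in> set ys \<and> (k, b) \<in> set ys \<and> a \<noteq> b}"
    by (rule runs_compare[OF _ ys(2) yc']) (simp add: ys(1) yc(1))
  moreover have "{k. \<exists>a b. (k, a) \<in> set ys \<and> (k, b) \<in> set ys \<and> a \<noteq> b}
      = {k. \<exists>a b. (k, a) \<in># items M \<and> (k, b) \<in># items M \<and> a \<noteq> b}"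
  proof -
    have "set ys = set_mset (items M)" using arg_cong[OF ys(1), of set_mset] by simp
    then show ?thesis by simp
  qed
  ultimately show ?thesis using count_interesting[of M] yc(3) ys(3) L(2) by simp
qed


end
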